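(* (Σ-completeness of $\mathsf{WSeq}$.) For every $\Sigma$-sentence $\phi$ of $\mathcal{L}$, if $\mathfrak{S}\models\phi$ then $\mathsf{WSeq}\vdash\phi$.
   Context: $\mathcal{L}$ is the first-order language $\{e, \vdash, \circ\}$ with $e$ a constant symbol and $\vdash$ (written infix), $\circ$ binary function symbols. Sequences: $()$ is a sequence, and for $n>0$, if $s_1,\ldots,s_n$ are sequences then $(s_1,\ldots,s_n)$ is a sequence. The standard structure $\mathfrak{S}$ has universe all sequences, $e^{\mathfrak{S}}=()$, $(s_1,\ldots,s_n)\vdash^{\mathfrak{S}} t=(s_1,\ldots,s_n,t)$, and $\circ^{\mathfrak{S}}$ is concatenation of sequences. The sequeral $\overline{s}$ of a sequence is the term with $\overline{()}=e$ and $\overline{(s_1,\ldots,s_n)}=(\ldots((e\vdash\overline{s_1})\vdash\overline{s_2})\ldots)\vdash\overline{s_n}$. For terms $t_1,t_2$, $t_1\sqsubseteq t_2$ abbreviates $\exists y[t_1\circ y=t_2]$, $t_1\not\sqsubseteq t_2$ abbreviates its negation, and $\forall x\sqsubseteq t[\phi]$ abbreviates $\forall x[x\sqsubseteq t\rightarrow\phi]$. The $\Sigma$-formulas are defined inductively: atomic formulas and negations of atomic formulas; $s\sqsubseteq t$ and $s\not\sqsubseteq t$ for terms $s,t$; $\alpha\wedge\beta$ and $\alpha\vee\beta$ for $\Sigma$-formulas $\alpha,\beta$; $\exists x[\phi]$ for a $\Sigma$-formula $\phi$; and $\forall x\sqsubseteq t[\phi]$ for a $\Sigma$-formula $\phi$,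 variable $x$ and term $t$ not containing $x$. The theory $\mathsf{WSeq}$ has the axiom schemes: ($\mathsf{WSeq}_1$) $\overline{s}\neq\overline{t}$ for all distinct sequences $s,t$; ($\mathsf{WSeq}_2$) $\overline{(s_1,\ldots,s_n)}\circ\overline{(t_1,\ldots,t_m)}=\overline{(s_1,\ldots,s_n,t_1,\ldots,t_m)}$ for all sequences; ($\mathsf{WSeq}_3$) $\forall x[x\sqsubseteq\overline{s}\rightarrow\bigvee_{t\in I(s)}x=\overline{t}]$ for every sequence $s$, where $I(s)$ is the set of all initial segments of $s$ (including $()$ and $s$). *)

theory Defs
  imports Main
begin

text \<open>A sequence is a finite list of sequences; () is Sq [].\<close>
datatype sq = Sq "sq list"

fun sq_elems :: "sq \<Rightarrow> sq list" where "sq_elems (Sq xs) = xs"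

definition sq_snoc :: "sq \<Rightarrow> sq \<Rightarrow> sq" where
  "sq_snoc s t = Sq (sq_elems s @ [t])"

definition sq_cat :: "sq \<Rightarrow> sq \<Rightarrow> sq" where
  "sq_cat s t = Sq (sq_elems s @ sq_elems t)"

section \<open>Syntax of the language L = {e, \<turnstile>, \<circ>} (with equality)\<close>

datatype trm = TVar nat | TE | TCons trm trm | TCat trm trm

datatype fm = FEq trm trm | FNeg fm | FImp fm fm | FAll nat fm

definition FConj :: "fm \<Rightarrow> fm \<Rightarrow> fm" where "FConj a b = FNeg (FImp a (FNeg b))"
definition FDisj :: "fm \<Rightarrow> fm \<Rightarrow> fm" where "FDisj a b = FImp (FNeg a) b"
definition FEx :: "nat \<Rightarrow> fm \<Rightarrow> fm" where "FEx x a = FNeg (FAll x (FNeg a))"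

fun tvars :: "trm \<Rightarrow> nat set" where
  "tvars (TVar x) = {x}"
| "tvars TE = {}"
| "tvars (TCons s t) = tvars s \<union> tvars t"
| "tvars (TCat s t) = tvars s \<union> tvars t"

fun fv :: "fm \<Rightarrow> nat set" where
  "fv (FEq s t) = tvars s \<union> tvars t"
| "fv (FNeg a) = fv a"
| "fv (FImp a b) = fv a \<union> fv b"
| "fv (FAll x a) = fv a - {x}"

definition sentence :: "fm \<Rightarrow> bool" where "sentence a \<longleftrightarrow> fv a = {}"

text \<open>t1 \<sqsubseteq> t2 abbreviates \<exists>y[t1 \<circ> y = t2], y a variable not occurring in t1, t2.\<close>
definition fresh2 :: "trm \<Rightarrow> trm \<Rightarrow> nat" where
  "fresh2 s t = Suc (Max (insert 0 (tvars s \<union> tvars t)))"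

definition FSub :: "trm \<Rightarrow> trm \<Rightarrow> fm" where
  "FSub s t = FEx (fresh2 s t) (FEq (TCat s (TVar (fresh2 s t))) t)"

definition FBAll :: "nat \<Rightarrow> trm \<Rightarrow> fm \<Rightarrow> fm" where
  "FBAll x t a = FAll x (FImp (FSub (TVar x) t) a)"

fun FBigDisj :: "fm list \<Rightarrow> fm" where
  "FBigDisj [] = FNeg (FEq TE TE)"
| "FBigDisj [a] = a"
| "FBigDisj (a # as) = FDisj a (FBigDisj as)"

fun teval :: "(nat \<Rightarrow> sq) \<Rightarrow> trm \<Rightarrow> sq" where
  "teval e (TVar x) = e x"
| "teval e TE = Sq []"
| "teval e (TCons s t) = sq_snoc (teval e s) (teval e t)"
| "teval e (TCat s t) = sq_cat (teval e s) (teval e t)"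

fun holds :: "(nat \<Rightarrow> sq) \<Rightarrow> fm \<Rightarrow> bool" where
  "holds e (FEq s t) \<longleftrightarrow> teval e s = teval e t"
| "holds e (FNeg a) \<longleftrightarrow> \<not> holds e a"
| "holds e (FImp a b) \<longleftrightarrow> (holds e a \<longrightarrow> holds e b)"
| "holds e (FAll x a) \<longleftrightarrow> (\<forall>v. holds (e(x := v)) a)"

text \<open>S \<Turnstile> \<phi> (for a sentence, independent of the assignment).\<close>
definition true_in_S :: "fm \<Rightarrow> bool" where
  "true_in_S a \<longleftrightarrow> (\<forall>e. holds e a)"

inductive Sigma :: "fm \<Rightarrow> bool" where
  atom: "Sigma (FEq s t)"
| neg_atom: "Sigma (FNeg (FEq s t))"
| sub: "Sigma (FSub s t)"
| neg_sub: "Sigma (FNeg (FSub s t))"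
| conj: "Sigma a \<Longrightarrow> Sigma b \<Longrightarrow> Sigma (FConj a b)"
| disj: "Sigma a \<Longrightarrow> Sigma b \<Longrightarrow> Sigma (FDisj a b)"
| ex: "Sigma a \<Longrightarrow> Sigma (FEx x a)"
| ball: "Sigma a \<Longrightarrow> x \<notin> tvars t \<Longrightarrow> Sigma (FBAll x t a)"

fun numeral_sq :: "sq \<Rightarrow> trm" where
  "numeral_sq (Sq xs) = foldl (\<lambda>acc s. TCons acc (numeral_sq s)) TE xs"

definition initial_segments :: "sq \<Rightarrow> sq list" where
  "initial_segments s = map (\<lambda>k. Sq (take k (sq_elems s))) [0..<Suc (length (sq_elems s))]"

inductive_set WSeq :: "fm set" where
  wseq1: "s \<noteq> t \<Longrightarrow> FNeg (FEq (numeral_sq s) (numeral_sq t)) \<in> WSeq"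
| wseq2: "FEq (TCat (numeral_sq (Sq xs)) (numeral_sq (Sq ys))) (numeral_sq (Sq (xs @ ys))) \<in> WSeq"
| wseq3: "FAll x (FImp (FSub (TVar x) (numeral_sq s))
            (FBigDisj (map (\<lambda>u. FEq (TVar x) (numeral_sq u)) (initial_segments s)))) \<in> WSeq"

fun tsubst :: "trm \<Rightarrow> nat \<Rightarrow> trm \<Rightarrow> trm" where
  "tsubst (TVar y) x u = (if y = x then u else TVar y)"
| "tsubst TE x u = TE"
| "tsubst (TCons s t) x u = TCons (tsubst s x u) (tsubst t x u)"
| "tsubst (TCat s t) x u = TCat (tsubst s x u) (tsubst t x u)"

fun fsubst :: "fm \<Rightarrow> nat \<Rightarrow> trm \<Rightarrow> fm" where
  "fsubst (FEq s t) x u = FEq (tsubst s x u) (tsubst t x u)"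
| "fsubst (FNeg a) x u = FNeg (fsubst a x u)"
| "fsubst (FImp a b) x u = FImp (fsubst a x u) (fsubst b x u)"
| "fsubst (FAll y a) x u = (if y = x then FAll y a else FAll y (fsubst a x u))"

fun substitutable :: "trm \<Rightarrow> nat \<Rightarrow> fm \<Rightarrow> bool" where
  "substitutable u x (FEq s t) = True"
| "substitutable u x (FNeg a) = substitutable u x a"
| "substitutable u x (FImp a b) = (substitutable u x a \<and> substitutable u x b)"
| "substitutable u x (FAll y a) =
     (x \<notin> fv (FAll y a) \<or> (y \<notin> tvars u \<and> substitutable u x a))"

fun pval :: "(fm \<Rightarrow> bool) \<Rightarrow> fm \<Rightarrow> bool" where
  "pval v (FEq s t) = v (FEq s t)"
| "pval v (FNeg a) = (\<not> pval v a)"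
| "pval v (FImp a b) = (pval v a \<longrightarrow> pval v b)"
| "pval v (FAll x a) = v (FAll x a)"

definition tautology :: "fm \<Rightarrow> bool" where
  "tautology a \<longleftrightarrow> (\<forall>v. pval v a)"

inductive trepl :: "nat \<Rightarrow> nat \<Rightarrow> trm \<Rightarrow> trm \<Rightarrow> bool" where
  refl: "trepl x y t t"
| var: "trepl x y (TVar x) (TVar y)"
| cons: "trepl x y s s' \<Longrightarrow> trepl x y t t' \<Longrightarrow> trepl x y (TCons s t) (TCons s' t')"
| cat: "trepl x y s s' \<Longrightarrow> trepl x y t t' \<Longrightarrow> trepl x y (TCat s t) (TCat s' t')"

inductive_set base_axioms :: "fm set" where
  taut: "tautology a \<Longrightarrow> a \<in> base_axioms"
| inst: "substitutable u x a \<Longrightarrow> FImp (FAll x a) (fsubst a x u) \<in> base_axioms"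
| distr: "FImp (FAll x (FImp a b)) (FImp (FAll x a) (FAll x b)) \<in> base_axioms"
| vacuous: "x \<notin> fv a \<Longrightarrow> FImp a (FAll x a) \<in> base_axioms"
| eq_refl: "FEq (TVar x) (TVar x) \<in> base_axioms"
| eq_subst: "trepl x y s s' \<Longrightarrow> trepl x y t t' \<Longrightarrow>
     FImp (FEq (TVar x) (TVar y)) (FImp (FEq s t) (FEq s' t')) \<in> base_axioms"

inductive_set logical_axioms :: "fm set" where
  base: "a \<in> base_axioms \<Longrightarrow> a \<in> logical_axioms"
| gen: "a \<in> logical_axioms \<Longrightarrow> FAll x a \<in> logical_axioms"

inductive proves :: "fm set \<Rightarrow> fm \<Rightarrow> bool" where
  hyp: "a \<in> \<Gamma> \<Longrightarrow> proves \<Gamma> a"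
| ax: "a \<in> logical_axioms \<Longrightarrow> proves \<Gamma> a"
| mp: "proves \<Gamma> (FImp a b) \<Longrightarrow> proves \<Gamma> a \<Longrightarrow> proves \<Gamma> b"

end

theory Submission
  imports Defs
begin


abbreviation pr :: "fm \<Rightarrow> bool" where "pr a \<equiv> proves WSeq a"

lemma finite_tvars[simp]: "finite (tvars t)" by (induction t) auto
lemma tsubst_nofree: "x \<notin> tvars t \<Longrightarrow> tsubst t x u = t" by (induction t) auto
lemma tsubst_closed[simp]: "tvars t = {} \<Longrightarrow> tsubst t x u = t" by (simp add: tsubst_nofree)
lemma tvars_tsubst: "tvars (tsubst t x u) \<subseteq> (tvars t - {x}) \<union> tvars u" by (induction t) auto
lemma tsubst_self[simp]: "tsubst t x (TVar x) = t" by (induction t) auto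
lemma fsubst_self[simp]: "fsubst a x (TVar x) = a" by (induction a) auto
lemma substitutable_self: "substitutable (TVar x) x a" by (induction a) auto
lemma substitutable_closed: "tvars u = {} \<Longrightarrow> substitutable u x a" by (induction a) auto
lemma tsubst_rename: "y \<notin> tvars s \<Longrightarrow> tsubst (tsubst s x (TVar y)) y b = tsubst s x b"
  by (induction s) auto
lemma tsubst_rename_nox: "y \<noteq> x \<Longrightarrow> x \<notin> tvars (tsubst s x (TVar y))" by (induction s) auto
lemma trepl_tsubst: "trepl x y s (tsubst s x (TVar y))"
  by (induction s) (auto intro: trepl.intros)

lemma fresh_var: "finite (S::nat set) \<Longrightarrow> \<exists>y. y \<notin> S"
  using ex_new_if_finite[OF infinite_UNIV_nat] by auto

lemma fresh2_notin: "fresh2 s t \<notin> tvars s" "fresh2 s t \<notin> tvars t"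
proof -
  have "\<And>x. x \<in> tvars s \<union> tvars t \<Longrightarrow> x < fresh2 s t"
    unfolding fresh2_def by (simp add: le_imp_less_Suc)
  then show "fresh2 s t \<notin> tvars s" "fresh2 s t \<notin> tvars t" by auto
qed

section \<open>Propositional reasoning\<close>

lemma pval_foldr: "pval v (foldr FImp as b) = ((\<forall>a\<in>set as. pval v a) \<longrightarrow> pval v b)"
  by (induction as) auto
lemma mp_foldr: "pr (foldr FImp as b) \<Longrightarrow> \<forall>a\<in>set as. pr a \<Longrightarrow> pr b"
  by (induction as) (auto intro: proves.mp)
lemma PC: assumes "\<And>v. \<forall>a\<in>set as. pval v a \<Longrightarrow> pval v b" "\<forall>a\<in>set as. pr a" shows "pr b"
proof -
  have "tautology (foldr FImp as b)" using assms(1) by (simp add: tautology_def pval_foldr)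
  then have "pr (foldr FImp as b)" by (intro proves.ax logical_axioms.base base_axioms.taut)
  then show ?thesis using assms(2) mp_foldr by blast
qed
lemma PC0: "(\<And>v. pval v b) \<Longrightarrow> pr b" by (rule PC[of "[]"]) auto
lemma PC1: "(\<And>v. pval v a1 \<Longrightarrow> pval v b) \<Longrightarrow> pr a1 \<Longrightarrow> pr b"
  by (rule PC[of "[a1]"]) auto
lemma PC2: "(\<And>v. pval v a1 \<Longrightarrow> pval v a2 \<Longrightarrow> pval v b) \<Longrightarrow> pr a1 \<Longrightarrow> pr a2 \<Longrightarrow> pr b"
  by (rule PC[of "[a1,a2]"]) auto
lemma PC3: "(\<And>v. pval v a1 \<Longrightarrow> pval v a2 \<Longrightarrow> pval v a3 \<Longrightarrow> pval v b) \<Longrightarrow> pr a1 \<Longrightarrow> pr a2 \<Longrightarrow> pr a3 \<Longrightarrow> pr b"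
  by (rule PC[of "[a1,a2,a3]"]) auto
lemma PC4: "(\<And>v. pval v a1 \<Longrightarrow> pval v a2 \<Longrightarrow> pval v a3 \<Longrightarrow> pval v a4 \<Longrightarrow> pval v b) \<Longrightarrow> pr a1 \<Longrightarrow> pr a2 \<Longrightarrow> pr a3 \<Longrightarrow> pr a4 \<Longrightarrow> pr b"
  by (rule PC[of "[a1,a2,a3,a4]"]) auto

section \<open>Quantifier rules\<close>

lemma ax_inst: "substitutable u x a \<Longrightarrow> pr (FImp (FAll x a) (fsubst a x u))"
  by (intro proves.ax logical_axioms.base base_axioms.inst)
lemma inst_rule: "pr (FAll x a) \<Longrightarrow> substitutable u x a \<Longrightarrow> pr (fsubst a x u)"
  using ax_inst proves.mp by blast

lemma sq_Sq_elems[simp]: "Sq (sq_elems s) = s" by (cases s) simp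
lemma num_nil: "numeral_sq (Sq []) = TE" by simp
lemma num_snoc: "numeral_sq (Sq (xs @ [y])) = TCons (numeral_sq (Sq xs)) (numeral_sq y)" by simp
declare numeral_sq.simps[simp del]

lemma foldl_tvars: "tvars acc = {} \<Longrightarrow> (\<forall>s\<in>set xs. tvars (numeral_sq s) = {}) \<Longrightarrow>
  tvars (foldl (\<lambda>acc s. TCons acc (numeral_sq s)) acc xs) = {}"
  by (induction xs arbitrary: acc) auto
lemma tvars_num[simp]: "tvars (numeral_sq s) = {}"
  by (induction s rule: numeral_sq.induct) (simp add: foldl_tvars numeral_sq.simps)

lemma foldl_teval: "(\<forall>s\<in>set xs. teval e (numeral_sq s) = s) \<Longrightarrow>
  teval e (foldl (\<lambda>acc s. TCons acc (numeral_sq s)) acc xs) = Sq (sq_elems (teval e acc) @ xs)"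
  by (induction xs arbitrary: acc) (auto simp: sq_snoc_def)
lemma teval_num[simp]: "teval e (numeral_sq s) = s"
  by (induction s rule: numeral_sq.induct) (simp add: foldl_teval numeral_sq.simps)

lemma fv_bigdisj: "fv (FBigDisj l) \<subseteq> \<Union> (fv ` set l)"
  by (induction l rule: FBigDisj.induct) (auto simp: FDisj_def)

lemma fv_FSub: "fv (FSub s t) = tvars s \<union> tvars t"
  using fresh2_notin[of s t] by (auto simp: FSub_def FEx_def)

lemma WSeq_closed: "a \<in> WSeq \<Longrightarrow> fv a = {}"
proof (induction rule: WSeq.induct)
  case (wseq3 x s)
  have "fv (FBigDisj (map (\<lambda>u. FEq (TVar x) (numeral_sq u)) (initial_segments s))) \<subseteq> {x}"
    using fv_bigdisj by fastforce
  then show ?case by (auto simp: fv_FSub)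
qed auto

lemma gen_aux: "proves G a \<Longrightarrow> (\<forall>b\<in>G. fv b = {}) \<Longrightarrow> proves G (FAll x a)"
proof (induction rule: proves.induct)
  case (hyp a G)
  have "proves G (FImp a (FAll x a))" using hyp
    by (intro proves.ax logical_axioms.base base_axioms.vacuous) auto
  then show ?case using hyp by (auto intro: proves.mp proves.hyp)
next
  case (ax a G)
  then show ?case by (intro proves.ax logical_axioms.gen)
next
  case (mp G a b)
  have "proves G (FImp (FAll x (FImp a b)) (FImp (FAll x a) (FAll x b)))"
    by (intro proves.ax logical_axioms.base base_axioms.distr)
  then show ?case using mp by (meson proves.mp)
qed

lemma gen_rule: "pr a \<Longrightarrow> pr (FAll x a)"
  using gen_aux WSeq_closed by blast

lemma all_imp: assumes "pr (FImp a b)" "x \<notin> fv a" shows "pr (FImp a (FAll x b))"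
proof -
  have 1: "pr (FAll x (FImp a b))" using gen_rule assms(1) .
  have 2: "pr (FImp (FAll x (FImp a b)) (FImp (FAll x a) (FAll x b)))"
    by (intro proves.ax logical_axioms.base base_axioms.distr)
  have 3: "pr (FImp a (FAll x a))" using assms(2)
    by (intro proves.ax logical_axioms.base base_axioms.vacuous)
  show ?thesis by (rule PC3[OF _ 1 2 3]) auto
qed

lemma ex_elim: assumes "pr (FImp a b)" "x \<notin> fv b" shows "pr (FImp (FEx x a) b)"
proof -
  have "pr (FImp (FNeg b) (FNeg a))" by (rule PC1[OF _ assms(1)]) auto
  then have "pr (FImp (FNeg b) (FAll x (FNeg a)))" using assms(2) by (intro all_imp) auto
  then show ?thesis unfolding FEx_def by (rule PC1[rotated]) auto
qed

lemma ex_intro_imp: assumes "substitutable u x a" shows "pr (FImp (fsubst a x u) (FEx x a))"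
proof -
  have "pr (FImp (FAll x (FNeg a)) (fsubst (FNeg a) x u))" using assms by (intro ax_inst) simp
  then show ?thesis unfolding FEx_def by (rule PC1[rotated]) auto
qed

lemma ex_intro: "pr (fsubst a x u) \<Longrightarrow> substitutable u x a \<Longrightarrow> pr (FEx x a)"
  using ex_intro_imp proves.mp by blast



lemma eq_cong: "pr (FImp (FEq a b) (FImp (FEq (tsubst s x a) (tsubst r x a)) (FEq (tsubst s x b) (tsubst r x b))))"
proof -
  obtain y where y: "y \<notin> {x} \<union> tvars a \<union> tvars b \<union> tvars s \<union> tvars r"
    using fresh_var[of "{x} \<union> tvars a \<union> tvars b \<union> tvars s \<union> tvars r"] by auto
  define \<Phi> where "\<Phi> = FImp (FEq (TVar x) (TVar y)) (FImp (FEq s r) (FEq (tsubst s x (TVar y)) (tsubst r x (TVar y))))"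
  have "\<Phi> \<in> base_axioms" unfolding \<Phi>_def by (intro base_axioms.eq_subst trepl_tsubst)
  hence "FAll x (FAll y \<Phi>) \<in> logical_axioms" by (intro logical_axioms.gen logical_axioms.base)
  hence "pr (FAll x (FAll y \<Phi>))" by (rule proves.ax)
  hence "pr (fsubst (FAll y \<Phi>) x a)" by (rule inst_rule) (use y in \<open>simp add: \<Phi>_def\<close>)
  hence "pr (FAll y (fsubst \<Phi> x a))" using y by simp
  hence "pr (fsubst (fsubst \<Phi> x a) y b)" by (rule inst_rule) (simp add: \<Phi>_def)
  moreover
  have e1: "tsubst (tsubst s x (TVar y)) x a = tsubst s x (TVar y)" "tsubst (tsubst r x (TVar y)) x a = tsubst r x (TVar y)"
    using y by (auto intro!: tsubst_nofree tsubst_rename_nox)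
  have e2: "tsubst (tsubst s x (TVar y)) y b = tsubst s x b" "tsubst (tsubst r x (TVar y)) y b = tsubst r x b"
    using y by (auto intro!: tsubst_rename)
  have e3: "tsubst (tsubst s x a) y b = tsubst s x a" "tsubst (tsubst r x a) y b = tsubst r x a"
    using y tvars_tsubst[of s x a] tvars_tsubst[of r x a] by (auto intro!: tsubst_nofree)
  have e4: "tsubst a y b = a" using y by (auto intro!: tsubst_nofree)
  have "fsubst (fsubst \<Phi> x a) y b = FImp (FEq a b) (FImp (FEq (tsubst s x a) (tsubst r x a)) (FEq (tsubst s x b) (tsubst r x b)))"
    using y e1 e2 e3 e4 by (simp add: \<Phi>_def)
  ultimately show ?thesis by simp
qed

lemma eq_refl_t: "pr (FEq a a)"
proof -
  have "pr (FAll 0 (FEq (TVar 0) (TVar 0)))"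
    by (intro proves.ax logical_axioms.gen logical_axioms.base base_axioms.eq_refl)
  from inst_rule[OF this, of a] show ?thesis by simp
qed

lemma eq_sym_imp: "pr (FImp (FEq a b) (FEq b a))"
proof -
  obtain x where x: "x \<notin> tvars a \<union> tvars b" using fresh_var[of "tvars a \<union> tvars b"] by auto
  have "pr (FImp (FEq a b) (FImp (FEq (tsubst (TVar x) x a) (tsubst a x a)) (FEq (tsubst (TVar x) x b) (tsubst a x b))))"
    by (rule eq_cong)
  then have 1: "pr (FImp (FEq a b) (FImp (FEq a a) (FEq b a)))" using x by (simp add: tsubst_nofree)
  show ?thesis by (rule PC2[OF _ 1 eq_refl_t]) auto
qed

lemma eq_trans_imp: "pr (FImp (FEq a b) (FImp (FEq b c) (FEq a c)))"
proof -
  obtain x where x: "x \<notin> tvars a \<union> tvars b \<union> tvars c" using fresh_var[of "tvars a \<union> tvars b \<union> tvars c"] by auto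
  have "pr (FImp (FEq b a) (FImp (FEq (tsubst (TVar x) x b) (tsubst c x b)) (FEq (tsubst (TVar x) x a) (tsubst c x a))))"
    by (rule eq_cong)
  then have 1: "pr (FImp (FEq b a) (FImp (FEq b c) (FEq a c)))" using x by (simp add: tsubst_nofree)
  show ?thesis by (rule PC2[OF _ 1 eq_sym_imp]) auto
qed

lemma eq_sym: "pr (FEq a b) \<Longrightarrow> pr (FEq b a)"
  using eq_sym_imp proves.mp by blast
lemma eq_trans: "pr (FEq a b) \<Longrightarrow> pr (FEq b c) \<Longrightarrow> pr (FEq a c)"
  using eq_trans_imp proves.mp by blast

lemma cong_cons: assumes "pr (FEq a a')" "pr (FEq b b')" shows "pr (FEq (TCons a b) (TCons a' b'))"
proof -
  obtain x where x: "x \<notin> tvars a \<union> tvars b \<union> tvars a' \<union> tvars b'"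
    using fresh_var[of "tvars a \<union> tvars b \<union> tvars a' \<union> tvars b'"] by auto
  have "pr (FImp (FEq a a') (FImp (FEq (tsubst (TCons a b) x a) (tsubst (TCons (TVar x) b) x a))
     (FEq (tsubst (TCons a b) x a') (tsubst (TCons (TVar x) b) x a'))))" by (rule eq_cong)
  then have "pr (FImp (FEq a a') (FImp (FEq (TCons a b) (TCons a b)) (FEq (TCons a b) (TCons a' b))))"
    using x by (simp add: tsubst_nofree)
  then have 1: "pr (FEq (TCons a b) (TCons a' b))" using assms eq_refl_t proves.mp by blast
  have "pr (FImp (FEq b b') (FImp (FEq (tsubst (TCons a' b) x b) (tsubst (TCons a' (TVar x)) x b))
     (FEq (tsubst (TCons a' b) x b') (tsubst (TCons a' (TVar x)) x b'))))" by (rule eq_cong)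
  then have "pr (FImp (FEq b b') (FImp (FEq (TCons a' b) (TCons a' b)) (FEq (TCons a' b) (TCons a' b'))))"
    using x by (simp add: tsubst_nofree)
  then have 2: "pr (FEq (TCons a' b) (TCons a' b'))" using assms eq_refl_t proves.mp by blast
  show ?thesis using eq_trans[OF 1 2] .
qed

lemma cong_cat: assumes "pr (FEq a a')" "pr (FEq b b')" shows "pr (FEq (TCat a b) (TCat a' b'))"
proof -
  obtain x where x: "x \<notin> tvars a \<union> tvars b \<union> tvars a' \<union> tvars b'"
    using fresh_var[of "tvars a \<union> tvars b \<union> tvars a' \<union> tvars b'"] by auto
  have "pr (FImp (FEq a a') (FImp (FEq (tsubst (TCat a b) x a) (tsubst (TCat (TVar x) b) x a))
     (FEq (tsubst (TCat a b) x a') (tsubst (TCat (TVar x) b) x a'))))" by (rule eq_cong)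
  then have "pr (FImp (FEq a a') (FImp (FEq (TCat a b) (TCat a b)) (FEq (TCat a b) (TCat a' b))))"
    using x by (simp add: tsubst_nofree)
  then have 1: "pr (FEq (TCat a b) (TCat a' b))" using assms eq_refl_t proves.mp by blast
  have "pr (FImp (FEq b b') (FImp (FEq (tsubst (TCat a' b) x b) (tsubst (TCat a' (TVar x)) x b))
     (FEq (tsubst (TCat a' b) x b') (tsubst (TCat a' (TVar x)) x b'))))" by (rule eq_cong)
  then have "pr (FImp (FEq b b') (FImp (FEq (TCat a' b) (TCat a' b)) (FEq (TCat a' b) (TCat a' b'))))"
    using x by (simp add: tsubst_nofree)
  then have 2: "pr (FEq (TCat a' b) (TCat a' b'))" using assms eq_refl_t proves.mp by blast
  show ?thesis using eq_trans[OF 1 2] .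
qed

lemma closed_num: "tvars t = {} \<Longrightarrow> pr (FEq t (numeral_sq (teval e t)))"
proof (induction t)
  case (TVar x) then show ?case by simp
next
  case TE then show ?case using eq_refl_t by (simp add: num_nil)
next
  case (TCons s r)
  then have 1: "pr (FEq (TCons s r) (TCons (numeral_sq (teval e s)) (numeral_sq (teval e r))))"
    by (auto intro: cong_cons)
  have "TCons (numeral_sq (teval e s)) (numeral_sq (teval e r)) = numeral_sq (teval e (TCons s r))"
    by (simp add: sq_snoc_def num_snoc)
  then show ?case using 1 by simp
next
  case (TCat s r)
  then have 1: "pr (FEq (TCat s r) (TCat (numeral_sq (teval e s)) (numeral_sq (teval e r))))"
    by (auto intro: cong_cat)
  obtain xs ys where xy: "teval e s = Sq xs" "teval e r = Sq ys" by (meson sq.exhaust)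
  have 2: "pr (FEq (TCat (numeral_sq (Sq xs)) (numeral_sq (Sq ys))) (numeral_sq (Sq (xs @ ys))))"
    by (intro proves.hyp WSeq.wseq2)
  have "teval e (TCat s r) = Sq (xs @ ys)" using xy by (simp add: sq_cat_def)
  then show ?case using eq_trans[OF 1] 2 xy by simp
qed

lemma closed_eq: "tvars s = {} \<Longrightarrow> tvars t = {} \<Longrightarrow> teval e s = teval e t \<Longrightarrow> pr (FEq s t)"
  using closed_num[of s e] closed_num[of t e] eq_sym eq_trans by metis

lemma closed_neq: assumes "tvars s = {}" "tvars t = {}" "teval e s \<noteq> teval e t" shows "pr (FNeg (FEq s t))"
proof -
  let ?a = "numeral_sq (teval e s)" and ?b = "numeral_sq (teval e t)"
  have 1: "pr (FNeg (FEq ?a ?b))" using assms(3) by (intro proves.hyp WSeq.wseq1)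
  have 2: "pr (FEq ?a s)" using closed_num[OF assms(1)] eq_sym by blast
  have 3: "pr (FEq t ?b)" using closed_num[OF assms(2)] .
  have 4: "pr (FImp (FEq s t) (FEq ?a t))" by (rule PC2[OF _ 2 eq_trans_imp[of ?a s t]]) auto
  show ?thesis by (rule PC4[OF _ 1 3 4 eq_trans_imp[of ?a t ?b]]) auto
qed



fun tss :: "(nat \<Rightarrow> trm) \<Rightarrow> trm \<Rightarrow> trm" where
  "tss \<sigma> (TVar x) = \<sigma> x"
| "tss \<sigma> TE = TE"
| "tss \<sigma> (TCons s t) = TCons (tss \<sigma> s) (tss \<sigma> t)"
| "tss \<sigma> (TCat s t) = TCat (tss \<sigma> s) (tss \<sigma> t)"

fun fss :: "(nat \<Rightarrow> trm) \<Rightarrow> fm \<Rightarrow> fm" where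
  "fss \<sigma> (FEq s t) = FEq (tss \<sigma> s) (tss \<sigma> t)"
| "fss \<sigma> (FNeg a) = FNeg (fss \<sigma> a)"
| "fss \<sigma> (FImp a b) = FImp (fss \<sigma> a) (fss \<sigma> b)"
| "fss \<sigma> (FAll y a) = FAll y (fss (\<sigma>(y := TVar y)) a)"

lemma tss_cong: "(\<forall>z\<in>tvars t. \<sigma> z = \<sigma>' z) \<Longrightarrow> tss \<sigma> t = tss \<sigma>' t"
  by (induction t) auto

lemma tss_TVar: "tss TVar t = t" by (induction t) auto

lemma fss_id: "(\<forall>z\<in>fv a. \<sigma> z = TVar z) \<Longrightarrow> fss \<sigma> a = a"
proof (induction a arbitrary: \<sigma>)
  case (FEq s t)
  have "tss \<sigma> s = tss TVar s" "tss \<sigma> t = tss TVar t"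
    using FEq.prems by (auto intro!: tss_cong)
  then show ?case by (simp add: tss_TVar)
qed auto

lemma tvars_tss_num[simp]: "tvars (tss (\<lambda>z. numeral_sq (e z)) t) = {}" by (induction t) auto
lemma teval_tss_num[simp]: "teval e' (tss (\<lambda>z. numeral_sq (e z)) t) = teval e t" by (induction t) auto

lemma tsubst_tss: "\<forall>z. z \<noteq> x \<longrightarrow> x \<notin> tvars (\<sigma> z) \<Longrightarrow>
  tsubst (tss (\<sigma>(x := TVar x)) s) x u = tss (\<sigma>(x := u)) s"
  by (induction s) (auto simp: tsubst_nofree)

lemma fsubst_fss: "\<forall>z. z \<noteq> x \<longrightarrow> x \<notin> tvars (\<sigma> z) \<Longrightarrow>
  fsubst (fss (\<sigma>(x := TVar x)) a) x u = fss (\<sigma>(x := u)) a"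
proof (induction a arbitrary: \<sigma>)
  case (FEq s t)
  have h1: "tsubst (tss (\<sigma>(x := TVar x)) s) x u = tss (\<sigma>(x := u)) s" using FEq.prems by (rule tsubst_tss)
  have h2: "tsubst (tss (\<sigma>(x := TVar x)) t) x u = tss (\<sigma>(x := u)) t" using FEq.prems by (rule tsubst_tss)
  show ?case by (simp only: fss.simps fsubst.simps h1 h2)
next
  case (FAll y b)
  show ?case
  proof (cases "y = x")
    case True then show ?thesis unfolding True by (simp only: fss.simps fsubst.simps fun_upd_upd if_True)
  next
    case False
    have h: "\<forall>z. z \<noteq> x \<longrightarrow> x \<notin> tvars ((\<sigma>(y := TVar y)) z)" using FAll.prems False by auto
    have "fsubst (fss (\<sigma>(x := TVar x)) (FAll y b)) x u = FAll y (fsubst (fss ((\<sigma>(y := TVar y))(x := TVar x)) b) x u)"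
      using False by (simp add: fun_upd_twist)
    also have "\<dots> = FAll y (fss ((\<sigma>(y := TVar y))(x := u)) b)" by (simp only: FAll.IH[OF h])
    also have "\<dots> = fss (\<sigma>(x := u)) (FAll y b)" using False by (simp add: fun_upd_twist)
    finally show ?thesis .
  qed
qed auto

lemma fss_FSub: "fss \<sigma> (FSub s t) = FEx (fresh2 s t) (FEq (TCat (tss \<sigma> s) (TVar (fresh2 s t))) (tss \<sigma> t))"
proof -
  have "tss (\<sigma>(fresh2 s t := TVar (fresh2 s t))) s = tss \<sigma> s"
       "tss (\<sigma>(fresh2 s t := TVar (fresh2 s t))) t = tss \<sigma> t"
    using fresh2_notin[of s t] by (auto intro!: tss_cong)
  then show ?thesis by (simp add: FSub_def FEx_def)
qed

lemma fss_FEx: "fss \<sigma> (FEx x a) = FEx x (fss (\<sigma>(x := TVar x)) a)" by (simp add: FEx_def)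

lemma teval_cong: "(\<forall>z\<in>tvars t. e z = e' z) \<Longrightarrow> teval e t = teval e' t"
  by (induction t) auto

lemma holds_FEx: "holds e (FEx x a) = (\<exists>v. holds (e(x := v)) a)" by (simp add: FEx_def)

lemma holds_FSub: "holds e (FSub s t) = (\<exists>v. sq_cat (teval e s) v = teval e t)"
proof -
  let ?z = "fresh2 s t"
  have "\<And>v. teval (e(?z := v)) s = teval e s" "\<And>v. teval (e(?z := v)) t = teval e t"
    using fresh2_notin[of s t] by (auto intro!: teval_cong)
  then show ?thesis by (simp add: FSub_def FEx_def)
qed

lemma init_seg_iff: "u \<in> set (initial_segments b) \<longleftrightarrow> (\<exists>w. sq_cat u w = b)"
proof
  assume "u \<in> set (initial_segments b)"
  then obtain k where "u = Sq (take k (sq_elems b))" unfolding initial_segments_def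
    by (metis (no_types, lifting) imageE set_map)
  then have "sq_cat u (Sq (drop k (sq_elems b))) = b" by (simp add: sq_cat_def)
  then show "\<exists>w. sq_cat u w = b" by blast
next
  assume "\<exists>w. sq_cat u w = b"
  then obtain w where w: "sq_cat u w = b" by blast
  obtain us ws where u: "u = Sq us" and ww: "w = Sq ws" by (meson sq.exhaust)
  have b: "sq_elems b = us @ ws" using w u ww by (auto simp: sq_cat_def)
  have "u = Sq (take (length us) (sq_elems b))" using b u by simp
  moreover have "length us \<in> set [0..<Suc (length (sq_elems b))]" using b by auto
  ultimately show "u \<in> set (initial_segments b)" unfolding initial_segments_def set_map by (rule image_eqI)
qed

lemma fsubst_bigdisj: "fsubst (FBigDisj l) x u = FBigDisj (map (\<lambda>a. fsubst a x u) l)"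
  by (induction l rule: FBigDisj.induct) (auto simp: FDisj_def)

lemma neg_bigdisj: "\<forall>a\<in>set l. pr (FNeg a) \<Longrightarrow> pr (FNeg (FBigDisj l))"
proof (induction l rule: FBigDisj.induct)
  case 1 show ?case by (rule PC1[OF _ eq_refl_t[of TE]]) auto
next
  case (2 a) then show ?case by simp
next
  case (3 a b l)
  then have h1: "pr (FNeg a)" and h2: "pr (FNeg (FBigDisj (b # l)))" by auto
  show ?case by (simp only: FBigDisj.simps FDisj_def) (rule PC2[OF _ h1 h2], auto)
qed

lemma bigdisj_elim: "\<forall>a\<in>set l. pr (FImp a c) \<Longrightarrow> pr (FImp (FBigDisj l) c)"
proof (induction l rule: FBigDisj.induct)
  case 1 show ?case by (rule PC1[OF _ eq_refl_t[of TE]]) auto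
next
  case (2 a) then show ?case by simp
next
  case (3 a b l)
  then have h1: "pr (FImp a c)" and h2: "pr (FImp (FBigDisj (b # l)) c)" by auto
  show ?case by (simp only: FBigDisj.simps FDisj_def) (rule PC2[OF _ h1 h2], auto)
qed



lemma eq_fm: "tvars t = {} \<Longrightarrow>
  pr (FImp (FEq (TVar x) t) (FImp a (fsubst a x t))) \<and> pr (FImp (FEq (TVar x) t) (FImp (fsubst a x t) a))"
proof (induction a)
  case (FEq s r)
  have 1: "pr (FImp (FEq (TVar x) t) (FImp (FEq s r) (FEq (tsubst s x t) (tsubst r x t))))"
    using eq_cong[of "TVar x" t s x r] by simp
  have 2: "pr (FImp (FEq t (TVar x)) (FImp (FEq (tsubst s x t) (tsubst r x t)) (FEq s r)))"
    using eq_cong[of t "TVar x" s x r] by simp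
  have 3: "pr (FImp (FEq (TVar x) t) (FImp (FEq (tsubst s x t) (tsubst r x t)) (FEq s r)))"
    by (rule PC2[OF _ 2 eq_sym_imp]) auto
  show ?case using 1 3 by simp
next
  case (FNeg a)
  then have h1: "pr (FImp (FEq (TVar x) t) (FImp a (fsubst a x t)))"
    and h2: "pr (FImp (FEq (TVar x) t) (FImp (fsubst a x t) a))" by auto
  have "pr (FImp (FEq (TVar x) t) (FImp (FNeg a) (FNeg (fsubst a x t))))" by (rule PC1[OF _ h2]) auto
  moreover have "pr (FImp (FEq (TVar x) t) (FImp (FNeg (fsubst a x t)) (FNeg a)))" by (rule PC1[OF _ h1]) auto
  ultimately show ?case by simp
next
  case (FImp a b)
  then have h1: "pr (FImp (FEq (TVar x) t) (FImp a (fsubst a x t)))"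
    and h2: "pr (FImp (FEq (TVar x) t) (FImp (fsubst a x t) a))"
    and h3: "pr (FImp (FEq (TVar x) t) (FImp b (fsubst b x t)))"
    and h4: "pr (FImp (FEq (TVar x) t) (FImp (fsubst b x t) b))" by auto
  have "pr (FImp (FEq (TVar x) t) (FImp (FImp a b) (FImp (fsubst a x t) (fsubst b x t))))" by (rule PC2[OF _ h2 h3]) auto
  moreover have "pr (FImp (FEq (TVar x) t) (FImp (FImp (fsubst a x t) (fsubst b x t)) (FImp a b)))" by (rule PC2[OF _ h1 h4]) auto
  ultimately show ?case by simp
next
  case (FAll y b)
  show ?case
  proof (cases "y = x")
    case True
    then show ?thesis by (auto intro: PC0)
  next
    case False
    let ?E = "FEq (TVar x) t" and ?b' = "fsubst b x t"
    from FAll.IH FAll.prems have IH1: "pr (FImp ?E (FImp b ?b'))" and IH2: "pr (FImp ?E (FImp ?b' b))" by auto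
    have i1: "pr (FImp (FAll y b) b)" using ax_inst[of "TVar y" y b] substitutable_self by simp
    have i2: "pr (FImp (FAll y ?b') ?b')" using ax_inst[of "TVar y" y ?b'] substitutable_self by simp
    have fv1: "y \<notin> fv (FConj ?E (FAll y b))" "y \<notin> fv (FConj ?E (FAll y ?b'))"
      using False FAll.prems by (auto simp: FConj_def)
    have "pr (FImp (FConj ?E (FAll y b)) ?b')" unfolding FConj_def by (rule PC2[OF _ IH1 i1]) auto
    then have "pr (FImp (FConj ?E (FAll y b)) (FAll y ?b'))" using fv1 by (intro all_imp)
    then have d1: "pr (FImp ?E (FImp (FAll y b) (FAll y ?b')))" unfolding FConj_def by (rule PC1[rotated]) auto
    have "pr (FImp (FConj ?E (FAll y ?b')) b)" unfolding FConj_def by (rule PC2[OF _ IH2 i2]) auto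
    then have "pr (FImp (FConj ?E (FAll y ?b')) (FAll y b))" using fv1 by (intro all_imp)
    then have d2: "pr (FImp ?E (FImp (FAll y ?b') (FAll y b)))" unfolding FConj_def by (rule PC1[rotated]) auto
    show ?thesis using d1 d2 False by simp
  qed
qed



lemma holds_FConj: "holds e (FConj a b) = (holds e a \<and> holds e b)" by (simp add: FConj_def)
lemma holds_FDisj: "holds e (FDisj a b) = (holds e a \<or> holds e b)" by (auto simp: FDisj_def)

lemma num_upd: "(\<lambda>z. numeral_sq ((e(x := v)) z)) = (\<lambda>z. numeral_sq (e z))(x := numeral_sq v)"
  by auto

lemma main: "Sigma \<phi> \<Longrightarrow> holds e \<phi> \<Longrightarrow> pr (fss (\<lambda>z. numeral_sq (e z)) \<phi>)"
proof (induction \<phi> arbitrary: e rule: Sigma.induct)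
  case (atom s t)
  then show ?case by (auto intro!: closed_eq[where e=e])
next
  case (neg_atom s t)
  then show ?case by (auto intro!: closed_neq[where e=e])
next
  case (sub s t)
  let ?\<sigma> = "\<lambda>z. numeral_sq (e z)"
  let ?S = "tss ?\<sigma> s" and ?T = "tss ?\<sigma> t" and ?z = "fresh2 s t"
  from sub obtain v where v: "sq_cat (teval e s) v = teval e t" by (auto simp: holds_FSub)
  have "pr (FEq (TCat ?S (numeral_sq v)) ?T)" using v by (intro closed_eq[where e=e]) auto
  then have "pr (fsubst (FEq (TCat ?S (TVar ?z)) ?T) ?z (numeral_sq v))" by simp
  then have "pr (FEx ?z (FEq (TCat ?S (TVar ?z)) ?T))" by (rule ex_intro) (simp add: substitutable_closed)
  then show ?case by (simp add: fss_FSub)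
next
  case (neg_sub s t)
  let ?\<sigma> = "\<lambda>z. numeral_sq (e z)"
  let ?S = "tss ?\<sigma> s" and ?T = "tss ?\<sigma> t" and ?z = "fresh2 s t"
  let ?b = "teval e t"
  let ?nb = "numeral_sq ?b"
  let ?D = "FBigDisj (map (\<lambda>u. FEq ?S (numeral_sq u)) (initial_segments ?b))"
  have nots: "\<not> (\<exists>v. sq_cat (teval e s) v = ?b)" using neg_sub by (simp add: holds_FSub)
  have "pr (FAll 0 (FImp (FSub (TVar 0) ?nb)
            (FBigDisj (map (\<lambda>u. FEq (TVar 0) (numeral_sq u)) (initial_segments ?b)))))"
    by (intro proves.hyp WSeq.wseq3)
  from inst_rule[OF this, of ?S]
  have H1: "pr (FImp (FEx 1 (FEq (TCat ?S (TVar 1)) ?nb)) ?D)"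
    by (simp add: substitutable_closed FSub_def FEx_def fresh2_def fsubst_bigdisj comp_def)
  have "\<forall>a\<in>set (map (\<lambda>u. FEq ?S (numeral_sq u)) (initial_segments ?b)). pr (FNeg a)"
  proof
    fix a assume "a \<in> set (map (\<lambda>u. FEq ?S (numeral_sq u)) (initial_segments ?b))"
    then obtain u where u: "u \<in> set (initial_segments ?b)" and a: "a = FEq ?S (numeral_sq u)" by auto
    have "teval e s \<noteq> u" using u nots init_seg_iff by blast
    then show "pr (FNeg a)" unfolding a by (intro closed_neq[where e=e]) auto
  qed
  then have H3: "pr (FNeg ?D)" by (rule neg_bigdisj)
  have t1: "pr (FEq ?T ?nb)" using closed_num[of ?T e] by simp
  have t2: "pr (FImp (FEq (TCat ?S (TVar ?z)) ?nb) (FEx 1 (FEq (TCat ?S (TVar 1)) ?nb)))"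
    using ex_intro_imp[of "TVar ?z" 1 "FEq (TCat ?S (TVar 1)) ?nb"] by simp
  have "pr (FImp (FEq (TCat ?S (TVar ?z)) ?T) (FEx 1 (FEq (TCat ?S (TVar 1)) ?nb)))"
    by (rule PC3[OF _ t1 t2 eq_trans_imp[of "TCat ?S (TVar ?z)" ?T ?nb]]) auto
  then have H5: "pr (FImp (FEx ?z (FEq (TCat ?S (TVar ?z)) ?T)) (FEx 1 (FEq (TCat ?S (TVar 1)) ?nb)))"
    by (rule ex_elim) (simp add: FEx_def)
  have "pr (FNeg (FEx ?z (FEq (TCat ?S (TVar ?z)) ?T)))" by (rule PC3[OF _ H1 H3 H5]) auto
  then show ?case by (simp add: fss_FSub)
next
  case (conj a b)
  then have h1: "pr (fss (\<lambda>z. numeral_sq (e z)) a)" and h2: "pr (fss (\<lambda>z. numeral_sq (e z)) b)"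
    by (auto simp: holds_FConj)
  show ?case by (simp add: FConj_def) (rule PC2[OF _ h1 h2], auto)
next
  case (disj a b)
  then consider "pr (fss (\<lambda>z. numeral_sq (e z)) a)" | "pr (fss (\<lambda>z. numeral_sq (e z)) b)"
    by (auto simp: holds_FDisj)
  then show ?case
  proof cases
    case 1 then show ?thesis by (simp add: FDisj_def) (rule PC1[OF _ 1], auto)
  next
    case 2 then show ?thesis by (simp add: FDisj_def) (rule PC1[OF _ 2], auto)
  qed
next
  case (ex a x)
  let ?\<sigma> = "\<lambda>z. numeral_sq (e z)"
  from ex.prems obtain v where v: "holds (e(x := v)) a" by (auto simp: holds_FEx)
  have "pr (fss (?\<sigma>(x := numeral_sq v)) a)" using ex.IH[OF v] by (simp only: num_upd)
  then have "pr (fsubst (fss (?\<sigma>(x := TVar x)) a) x (numeral_sq v))"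
    by (subst fsubst_fss) auto
  then have "pr (FEx x (fss (?\<sigma>(x := TVar x)) a))" by (rule ex_intro) (simp add: substitutable_closed)
  then show ?case by (simp add: fss_FEx)
next
  case (ball a x t)
  let ?\<sigma> = "\<lambda>z. numeral_sq (e z)"
  let ?A = "fss (?\<sigma>(x := TVar x)) a"
  let ?T = "tss ?\<sigma> t" and ?z = "fresh2 (TVar x) t"
  let ?b = "teval e t"
  let ?nb = "numeral_sq ?b"
  let ?E = "FEx ?z (FEq (TCat (TVar x) (TVar ?z)) ?T)"
  let ?z1 = "Suc x"
  let ?E1 = "FEx ?z1 (FEq (TCat (TVar x) (TVar ?z1)) ?nb)"
  let ?D = "FBigDisj (map (\<lambda>u. FEq (TVar x) (numeral_sq u)) (initial_segments ?b))"
  have zx: "?z \<noteq> x" using fresh2_notin(1)[of "TVar x" t] by auto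
  have Tx: "tss (?\<sigma>(x := TVar x)) t = ?T" using ball.hyps(2) by (auto intro!: tss_cong)
  have shape: "fss ?\<sigma> (FBAll x t a) = FAll x (FImp ?E ?A)"
    by (simp add: FBAll_def fss_FSub Tx del: fun_upd_apply) (simp add: Tx)
  have t1: "pr (FEq ?T ?nb)" using closed_num[of ?T e] by simp
  have t2: "pr (FImp (FEq (TCat (TVar x) (TVar ?z)) ?nb) ?E1)"
    using ex_intro_imp[of "TVar ?z" ?z1 "FEq (TCat (TVar x) (TVar ?z1)) ?nb"] by simp
  have "pr (FImp (FEq (TCat (TVar x) (TVar ?z)) ?T) ?E1)"
    by (rule PC3[OF _ t1 t2 eq_trans_imp[of "TCat (TVar x) (TVar ?z)" ?T ?nb]]) auto
  then have H1: "pr (FImp ?E ?E1)"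
    by (rule ex_elim) (use zx in \<open>simp add: FEx_def\<close>)
  have "pr (FAll x (FImp (FSub (TVar x) ?nb) ?D))"
    by (intro proves.hyp WSeq.wseq3)
  from inst_rule[OF this substitutable_self]
  have H2: "pr (FImp ?E1 ?D)"
    by (simp add: FSub_def fresh2_def)
  have "\<forall>d\<in>set (map (\<lambda>u. FEq (TVar x) (numeral_sq u)) (initial_segments ?b)). pr (FImp d ?A)"
  proof
    fix d assume "d \<in> set (map (\<lambda>u. FEq (TVar x) (numeral_sq u)) (initial_segments ?b))"
    then obtain u where u: "u \<in> set (initial_segments ?b)" and d: "d = FEq (TVar x) (numeral_sq u)" by auto
    obtain w where w: "sq_cat u w = ?b" using u init_seg_iff by blast
    have "teval (e(x := u)) t = ?b" using ball.hyps(2) by (auto intro!: teval_cong)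
    then have "holds (e(x := u)) (FSub (TVar x) t)" using w by (auto simp: holds_FSub)
    then have "holds (e(x := u)) a" using ball.prems by (simp add: FBAll_def)
    then have "pr (fss (\<lambda>z. numeral_sq ((e(x := u)) z)) a)" by (rule ball.IH)
    then have "pr (fss (?\<sigma>(x := numeral_sq u)) a)" by (simp only: num_upd)
    then have p: "pr (fsubst ?A x (numeral_sq u))" by (subst fsubst_fss) auto
    have q: "pr (FImp (FEq (TVar x) (numeral_sq u)) (FImp (fsubst ?A x (numeral_sq u)) ?A))"
      using eq_fm[of "numeral_sq u" x ?A] by simp
    show "pr (FImp d ?A)" unfolding d by (rule PC2[OF _ p q]) auto
  qed
  then have H3: "pr (FImp ?D ?A)" by (rule bigdisj_elim)
  have "pr (FImp ?E ?A)" by (rule PC3[OF _ H1 H2 H3]) auto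
  then have "pr (FAll x (FImp ?E ?A))" by (rule gen_rule)
  then show ?case using shape by simp
qed


theorem theorem2:
  fixes \<phi> :: fm
  assumes "Sigma \<phi>" and "sentence \<phi>" and "true_in_S \<phi>"
  shows "proves WSeq \<phi>"
proof -
  have "holds (\<lambda>_. Sq []) \<phi>" using assms(3) by (simp add: true_in_S_def)
  then have "pr (fss (\<lambda>z. numeral_sq ((\<lambda>_. Sq []) z)) \<phi>)" by (rule main[OF assms(1)])
  moreover have "fss (\<lambda>z. numeral_sq ((\<lambda>_. Sq []) z)) \<phi> = \<phi>"
    using assms(2) by (intro fss_id) (simp add: sentence_def)
  ultimately show ?thesis by simp
qed

end
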